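(* For every finitely supported permutation $\tau$ of $[0,1[$ and every partition $\mathcal P$ associated with $\tau$, one has $\varepsilon(\tau,\mathcal P)=\operatorname{sgn}(\tau)$.
   Context: $X=[0,1[$; $\widehat{\operatorname{PC}^{\bowtie}}$ is the group of bijections $X\to X$ continuous outside a finite subset, which contains the group ${\mathfrak S}_{\mathrm{fin}}$ of finitely supported permutations; $\operatorname{sgn}:{\mathfrak S}_{\mathrm{fin}}\to\mathbb{Z}/2\mathbb{Z}$ is the classical signature. For $h\in\widehat{\operatorname{PC}^{\bowtie}}$, a partition associated with $h$ is a finite partition $\mathcal P=\{I_1,\dots,I_n\}$ of $X$ into intervals $I_j=[\alpha_j,b_j[$ such that $h$ is continuous on the open interval $I_j^\circ=]\alpha_j,b_j[$ for each $j$ (then $h$ is strictly monotone on $I_j^\circ$ and $h(I_j^\circ)$ is an open interval). Let $\beta_j$ be the left endpoint of $h(I_j^\circ)$; the sets $\{h(\alpha_j)\}$ and $\{\beta_j\}$ coincide, and $\sigma_{(h,\mathcal P)}\in{\mathfrak S}_{\mathrm{fin}}$ sends $h(\alpha_j)$ to $\beta_j$ for each $j$ and fixes all other points. $R(h,\mathcal P)$ is the number of $j$ with $h$ decreasing on $I_j^\circ$, and $\varepsilon(h,\mathcal P)=R(h,\mathcal P)+\operatorname{sgn}(\sigma_{(h,\mathcal P)})\bmod 2$. *)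

theory Defs
  imports "HOL-Analysis.Analysis" "HOL-Combinatorics.Permutations"
begin

definition X :: "real set" where "X = {0..<1}"

text \<open>Classical signature with values in Z/2Z, encoded as 0/1 :: nat.\<close>
definition sgn2 :: "(real \<Rightarrow> real) \<Rightarrow> nat" where
  "sgn2 p = (if evenperm p then 0 else 1)"

definition lend :: "real set \<Rightarrow> real" where "lend I = Inf I"
definition rend :: "real set \<Rightarrow> real" where "rend I = Sup I"
definition opn :: "real set \<Rightarrow> real set" where "opn I = {lend I<..<rend I}"

definition assoc_partition :: "(real \<Rightarrow> real) \<Rightarrow> real set set \<Rightarrow> bool" where
  "assoc_partition h P \<longleftrightarrow> finite P \<and> \<Union>P = X \<and>
     (\<forall>I\<in>P. \<forall>J\<in>P. I \<noteq> J \<longrightarrow> I \<inter> J = {}) \<and>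
     (\<forall>I\<in>P. \<exists>a b. a < b \<and> I = {a..<b} \<and> continuous_on {a<..<b} h)"

definition beta :: "(real \<Rightarrow> real) \<Rightarrow> real set \<Rightarrow> real" where
  "beta h I = Inf (h ` opn I)"

definition sigma :: "(real \<Rightarrow> real) \<Rightarrow> real set set \<Rightarrow> real \<Rightarrow> real" where
  "sigma h P x = (if \<exists>I\<in>P. h (lend I) = x
      then beta h (THE I. I \<in> P \<and> h (lend I) = x) else x)"

definition R :: "(real \<Rightarrow> real) \<Rightarrow> real set set \<Rightarrow> nat" where
  "R h P = card {I \<in> P. \<forall>x\<in>opn I. \<forall>y\<in>opn I. x < y \<longrightarrow> h y < h x}"

definition eps :: "(real \<Rightarrow> real) \<Rightarrow> real set set \<Rightarrow> nat" where
  "eps h P = (R h P + sgn2 (sigma h P)) mod 2"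

end

theory Submission
  imports Defs
begin

lemma cont_fix:
  fixes h :: "real \<Rightarrow> real"
  assumes fin: "finite {x. h x \<noteq> x}" and c: "continuous_on {a<..<b} h"
    and x: "x \<in> {a<..<b}"
  shows "h x = x"
proof (rule ccontr)
  assume ne: "h x \<noteq> x"
  have cg: "continuous_on {a<..<b} (\<lambda>y. h y - y)"
    by (intro continuous_intros c)
  define U where "U = (\<lambda>y. h y - y) -` (- {0}) \<inter> {a<..<b}"
  have oU: "open U" unfolding U_def
    using continuous_on_open_vimage[of "{a<..<b}", OF open_greaterThanLessThan, THEN iffD1, OF cg, rule_format, of "- {0}"] by (simp add: open_Compl)
  have xU: "x \<in> U" using x ne by (simp add: U_def)
  have inf: "infinite (U \<inter> UNIV)"
    using islimpt_UNIV[of x, unfolded islimpt_eq_acc_point, rule_format, OF xU oU] .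
  have sub: "U \<subseteq> {x. h x \<noteq> x}" by (auto simp: U_def)
  have "finite U" using finite_subset[OF sub fin] .
  then show False using inf by simp
qed

theorem proposition3p4:
  fixes \<tau> :: "real \<Rightarrow> real" and P :: "real set set"
  assumes "\<tau> permutes X" and "finite {x. \<tau> x \<noteq> x}"
    and "assoc_partition \<tau> P"
  shows "eps \<tau> P = sgn2 \<tau>"
proof -
  have ap1: "\<Union>P = X" and ap2: "\<And>I J. I \<in> P \<Longrightarrow> J \<in> P \<Longrightarrow> I \<noteq> J \<Longrightarrow> I \<inter> J = {}"
    and ap3: "\<And>I. I \<in> P \<Longrightarrow> \<exists>a b. a < b \<and> I = {a..<b} \<and> continuous_on {a<..<b} \<tau>"
  proof -
    have apd: "finite P \<and> \<Union>P = X \<and> (\<forall>I\<in>P. \<forall>J\<in>P. I \<noteq> J \<longrightarrow> I \<inter> J = {}) \<and>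
     (\<forall>I\<in>P. \<exists>a b. a < b \<and> I = {a..<b} \<and> continuous_on {a<..<b} \<tau>)"
      using assms(3) unfolding assoc_partition_def .
    show "\<Union>P = X" using apd by (elim conjE)
    show "\<And>I J. I \<in> P \<Longrightarrow> J \<in> P \<Longrightarrow> I \<noteq> J \<Longrightarrow> I \<inter> J = {}"
      using apd by (elim conjE) simp
    show "\<And>I. I \<in> P \<Longrightarrow> \<exists>a b. a < b \<and> I = {a..<b} \<and> continuous_on {a<..<b} \<tau>"
      using apd by (elim conjE) simp
  qed
  have bij: "bij \<tau>" using permutes_bij[OF assms(1)] .
  have perm: "permutation \<tau>" unfolding permutation using bij assms(2) by (rule conjI)
  have outX: "\<tau> x = x" if "x \<notin> X" for x using permutes_not_in[OF assms(1) that] .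
  have inX: "\<tau> x \<in> X" if "x \<in> X" for x using permutes_in_image[OF assms(1)] that by (rule iffD2)
  have iv: "\<exists>a b. a < b \<and> I = {a..<b} \<and> lend I = a \<and> opn I = {a<..<b}
       \<and> (\<forall>y\<in>{a<..<b}. \<tau> y = y)" if hI: "I \<in> P" for I
  proof -
    obtain a b where ab: "a < b" "I = {a..<b}" "continuous_on {a<..<b} \<tau>"
      using ap3[OF hI] by blast
    show ?thesis using ab cont_fix[OF assms(2) ab(3)]
      by (intro exI[of _ a] exI[of _ b]) (auto simp: lend_def rend_def opn_def)
  qed
  have lendI: "lend I \<in> I" if hI: "I \<in> P" for I
  proof -
    obtain a b where ab: "a < b" "I = {a..<b}" "lend I = a" using iv[OF hI] by (elim exE conjE) (rule that; assumption)
    show ?thesis unfolding ab(3) unfolding ab(2) using ab(1) by simp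
  qed
  have lend_inj: "I = J" if "I \<in> P" "J \<in> P" "lend I = lend J" for I J
  proof (rule ccontr)
    assume ne: "I \<noteq> J"
    have "I \<inter> J = {}" using ap2[OF that(1) that(2) ne] .
    moreover have "lend I \<in> I \<inter> J" using lendI[OF that(1)] lendI[OF that(2)] that(3) by simp
    ultimately show False by simp
  qed
  have lendX: "lend I \<in> X" if "I \<in> P" for I using UnionI[OF that lendI[OF that]] unfolding ap1 .
  have beta_eq: "beta \<tau> I = lend I" if hI: "I \<in> P" for I
  proof -
    obtain a b where ab: "a < b" "I = {a..<b}" "lend I = a" "opn I = {a<..<b}"
       "\<forall>y\<in>{a<..<b}. \<tau> y = y" using iv[OF hI] by (elim exE conjE) (rule that; assumption)
    have "\<tau> ` {a<..<b} = (\<lambda>y. y) ` {a<..<b}" using ab(5) by (intro image_cong) auto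
    then have im: "\<tau> ` opn I = {a<..<b}" unfolding ab(4) by simp
    show ?thesis unfolding beta_def im ab(3) using ab(1) by (rule cInf_greaterThanLessThan)
  qed
  have R0: "R \<tau> P = 0"
  proof -
    have "{I \<in> P. \<forall>x\<in>opn I. \<forall>y\<in>opn I. x < y \<longrightarrow> \<tau> y < \<tau> x} = {}"
    proof (rule equals0I)
      fix I assume "I \<in> {I \<in> P. \<forall>x\<in>opn I. \<forall>y\<in>opn I. x < y \<longrightarrow> \<tau> y < \<tau> x}"
      then have I: "I \<in> P" and d: "\<forall>x\<in>opn I. \<forall>y\<in>opn I. x < y \<longrightarrow> \<tau> y < \<tau> x" by auto
      obtain a b where ab: "a < b" "opn I = {a<..<b}" "\<forall>y\<in>{a<..<b}. \<tau> y = y"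
        using iv[OF I] by (elim exE conjE) (rule that; assumption)
      let ?x = "a + (b-a)/3" and ?y = "a + 2*(b-a)/3"
      have h: "?x \<in> opn I" "?y \<in> opn I" "?x < ?y" using ab(1) unfolding ab(2) by (auto simp: field_simps)
      have "\<tau> ?y < \<tau> ?x" using d h by blast
      moreover have "\<tau> ?x = ?x" "\<tau> ?y = ?y" using ab(3) h unfolding ab(2) by blast+
      ultimately show False using h(3) by linarith
    qed
    then show ?thesis unfolding R_def by (simp only: card.empty)
  qed
  have st: "sigma \<tau> P (\<tau> x) = x" for x
  proof (cases "\<exists>I\<in>P. lend I = x")
    case True
    then obtain I where I: "I \<in> P" "lend I = x" by blast
    have ex: "\<exists>J\<in>P. \<tau> (lend J) = \<tau> x" using I by blast
    have th: "(THE J. J \<in> P \<and> \<tau> (lend J) = \<tau> x) = I"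
    proof (rule the_equality)
      show "I \<in> P \<and> \<tau> (lend I) = \<tau> x" using I by simp
    next
      fix J assume "J \<in> P \<and> \<tau> (lend J) = \<tau> x"
      then show "J = I" using I lend_inj[of J I] bij_is_inj[OF bij] by (simp add: inj_eq)
    qed
    show ?thesis unfolding sigma_def if_P[OF ex] th beta_eq[OF I(1)] I(2) ..
  next
    case False
    have tx: "\<tau> x = x"
    proof (cases "x \<in> X")
      case True
      then obtain I where I: "I \<in> P" "x \<in> I" using ap1 by blast
      obtain a b where ab: "I = {a..<b}" "lend I = a" "\<forall>y\<in>{a<..<b}. \<tau> y = y"
        using iv[OF I(1)] by (elim exE conjE) (rule that; assumption)
      have "x \<noteq> a" using False I ab by blast
      then show ?thesis using ab I by auto
    qed (simp add: outX)
    have nex: "\<not> (\<exists>I\<in>P. \<tau> (lend I) = \<tau> x)"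
      using False bij_is_inj[OF bij] by (simp add: inj_eq)
    show ?thesis unfolding sigma_def if_not_P[OF nex] by (rule tx)
  qed
  have "inv \<tau> = sigma \<tau> P"
  proof (rule inv_equality)
    show "sigma \<tau> P (\<tau> x) = x" for x by (rule st)
    show "\<tau> (sigma \<tau> P y) = y" for y
    proof -
      have e: "\<tau> (inv \<tau> y) = y" using surj_f_inv_f[OF bij_is_surj[OF bij]] .
      have "sigma \<tau> P y = inv \<tau> y" using st[of "inv \<tau> y"] unfolding e .
      then show ?thesis using e by simp
    qed
  qed
  then have "sgn2 (sigma \<tau> P) = sgn2 \<tau>"
    using evenperm_inv[OF perm] by (simp add: sgn2_def)
  then show ?thesis by (simp add: eps_def R0 sgn2_def)
qed

end
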